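(* Let $D_1,\dots,D_n\in\mathbb{R}^{d\times m}$ be datum shapes with $\tilde{D}_i=\begin{bmatrix}D_i\\ \mathbf{1}^{\top}\end{bmatrix}$ such that each $\tilde{D}_i\tilde{D}_i^{\top}$ is invertible, and let $\mathcal{Q}_{I}=\sum_{i=1}^n\tilde{D}_i^{\top}(\tilde{D}_i\tilde{D}_i^{\top})^{-1}\tilde{D}_i$. Fix a diagonal matrix $\Lambda\in\mathbb{R}^{d\times d}$ and consider problem (I): $$\min_{\tilde{A}_1,\dots,\tilde{A}_n\in\mathbb{R}^{d\times(d+1)},\,S\in\mathbb{R}^{d\times m}}\ \sum_{i=1}^n\|\tilde{A}_i\tilde{D}_i-S\|_F^2\quad\text{s.t.}\quad SS^{\top}=\Lambda,\ S\mathbf{1}=0.$$ If each $D_i$ is replaced by $D_i'=R_iD_i+t_i\mathbf{1}^{\top}$ for arbitrary (possibly distinct) rotations $R_i\in\mathbb{R}^{d\times d}$ and translations $t_i\in\mathbb{R}^d$, then the matrix $\mathcal{Q}_I$ is unchanged, and so is the optimal reference shape $S$ of problem (I) (the set of $S$-components of optimal solutions is the same for the original and the transformed datum shapes).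
   Context: $\mathbf{1}\in\mathbb{R}^m$ denotes the all-ones vector and $\|\cdot\|_F$ the Frobenius norm. *)

theory Defs
  imports "HOL-Analysis.Analysis"
begin

text \<open>Matrices in R^{d x m} are \<open>real^'m^'d\<close>. The augmented index set of size d+1 is
  \<open>'d option\<close>, where \<open>None\<close> is the extra (last) row of ones.\<close>

definition ones :: "real^'m" where
  "ones = (\<chi> j. 1)"

definition aug :: "real^'m^'d \<Rightarrow> real^'m^('d option)" where
  "aug D = (\<chi> k j. case k of None \<Rightarrow> 1 | Some r \<Rightarrow> D $ r $ j)"

definition frob_norm :: "real^'c^'r \<Rightarrow> real" where
  "frob_norm A = sqrt (\<Sum>i\<in>UNIV. \<Sum>j\<in>UNIV. (A $ i $ j)^2)"

definition diagonal_matrix :: "real^'d^'d \<Rightarrow> bool" where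
  "diagonal_matrix L \<longleftrightarrow> (\<forall>i j. i \<noteq> j \<longrightarrow> L $ i $ j = 0)"

definition QI :: "nat \<Rightarrow> (nat \<Rightarrow> real^'m^'d) \<Rightarrow> real^'m^'m" where
  "QI n D = (\<Sum>i<n. transpose (aug (D i)) **
                    matrix_inv (aug (D i) ** transpose (aug (D i))) ** aug (D i))"

definition objI :: "nat \<Rightarrow> (nat \<Rightarrow> real^'m^'d) \<Rightarrow> (nat \<Rightarrow> real^('d option)^'d) \<Rightarrow> real^'m^'d \<Rightarrow> real" where
  "objI n D A S = (\<Sum>i<n. (frob_norm (A i ** aug (D i) - S))^2)"

definition feasibleI :: "real^'d^'d \<Rightarrow> real^'m^'d \<Rightarrow> bool" where
  "feasibleI L S \<longleftrightarrow> S ** transpose S = L \<and> S *v ones = 0"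

definition optimalI :: "nat \<Rightarrow> (nat \<Rightarrow> real^'m^'d) \<Rightarrow> real^'d^'d
      \<Rightarrow> (nat \<Rightarrow> real^('d option)^'d) \<Rightarrow> real^'m^'d \<Rightarrow> bool" where
  "optimalI n D L A S \<longleftrightarrow> feasibleI L S \<and>
     (\<forall>A' S'. feasibleI L S' \<longrightarrow> objI n D A S \<le> objI n D A' S')"

definition optimal_refs :: "nat \<Rightarrow> (nat \<Rightarrow> real^'m^'d) \<Rightarrow> real^'d^'d \<Rightarrow> (real^'m^'d) set" where
  "optimal_refs n D L = {S. \<exists>A. optimalI n D L A S}"

end

theory Submission
  imports Defs
begin

lemma sum_option_univ:
  fixes f :: "'a::finite option \<Rightarrow> 'b::comm_monoid_add"
  shows "(\<Sum>x\<in>UNIV. f x) = f None + (\<Sum>r\<in>UNIV. f (Some r))"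
  by (simp add: UNIV_option_conv sum.reindex)

definition Tm :: "real^'d^'d \<Rightarrow> real^'d \<Rightarrow> real^('d option)^('d option)" where
  "Tm A a = (\<chi> k l. case k of None \<Rightarrow> (case l of None \<Rightarrow> 1 | Some _ \<Rightarrow> 0)
                  | Some r \<Rightarrow> (case l of None \<Rightarrow> a $ r | Some c \<Rightarrow> A $ r $ c))"

lemma Tm_mult: "Tm A a ** Tm B b = Tm (A ** B) (A *v b + a)"
  unfolding vec_eq_iff
proof (intro allI)
  fix k l
  show "(Tm A a ** Tm B b) $ k $ l = Tm (A ** B) (A *v b + a) $ k $ l"
    by (cases k; cases l)
       (simp_all add: Tm_def matrix_matrix_mult_def matrix_vector_mult_def sum_option_univ)
qed

lemma mv_neg: "(A::real^'n^'k) *v (- x) = - (A *v x)"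
  by (simp add: matrix_vector_mult_def vec_eq_iff sum_negf)

lemma Tm_one: "Tm (mat 1 :: real^'d::finite^'d) 0 = mat 1"
  unfolding vec_eq_iff
proof (intro allI)
  fix k l
  show "Tm (mat 1) 0 $ k $ l = (mat 1 :: real^('d::finite option)^('d option)) $ k $ l"
    by (cases k; cases l) (auto simp add: Tm_def mat_def)
qed

lemma Tm_inv:
  assumes "orthogonal_matrix R"
  shows "Tm R t ** Tm (transpose R) (-(transpose R *v t)) = mat 1"
    "Tm (transpose R) (-(transpose R *v t)) ** Tm R t = mat 1"
proof -
  have o1: "R ** transpose R = mat 1" "transpose R ** R = mat 1"
    using assms by (auto simp: orthogonal_matrix_def)
  have rr: "R *v (transpose R *v t) = t"
    by (simp only: matrix_vector_mul_assoc o1 matrix_vector_mul_lid)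
  have "R *v (-(transpose R *v t)) + t = 0"
    by (simp only: mv_neg rr) simp
  then show "Tm R t ** Tm (transpose R) (-(transpose R *v t)) = mat 1"
    by (simp add: Tm_mult o1 Tm_one)
  show "Tm (transpose R) (-(transpose R *v t)) ** Tm R t = mat 1"
    by (simp add: Tm_mult o1 Tm_one)
qed

lemma aug_trans:
  "aug (R ** D + (\<chi> r j. t $ r * ones $ j)) = Tm R t ** aug D"
  unfolding vec_eq_iff
proof (intro allI)
  fix k l
  show "aug (R ** D + (\<chi> r j. t $ r * ones $ j)) $ k $ l = (Tm R t ** aug D) $ k $ l"
    by (cases k)
       (simp_all add: Tm_def aug_def ones_def matrix_matrix_mult_def sum_option_univ)
qed

lemma minv_eq:
  fixes A B :: "real^'n^'n"
  assumes "A ** B = mat 1" "B ** A = mat 1"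
  shows "matrix_inv A = B"
proof -
  have "\<exists>A'. A ** A' = mat 1 \<and> A' ** A = mat 1" using assms by blast
  then have C: "A ** matrix_inv A = mat 1 \<and> matrix_inv A ** A = mat 1"
    unfolding matrix_inv_def by (rule someI_ex)
  have "matrix_inv A = matrix_inv A ** (A ** B)" by (simp add: assms)
  also have "\<dots> = (matrix_inv A ** A) ** B" by (simp add: matrix_mul_assoc)
  also have "\<dots> = B" using C by simp
  finally show ?thesis .
qed

lemma minv_props:
  fixes A :: "real^'n^'n"
  assumes "invertible A"
  shows "A ** matrix_inv A = mat 1" "matrix_inv A ** A = mat 1"
proof -
  have "\<exists>A'. A ** A' = mat 1 \<and> A' ** A = mat 1" using assms by (simp add: invertible_def)
  then have C: "A ** matrix_inv A = mat 1 \<and> matrix_inv A ** A = mat 1"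
    unfolding matrix_inv_def by (rule someI_ex)
  then show "A ** matrix_inv A = mat 1" "matrix_inv A ** A = mat 1" by auto
qed

lemma Q_term:
  fixes X :: "real^'m^'k" and T U :: "real^'k^'k"
  assumes inv: "invertible (X ** transpose X)"
    and TU: "T ** U = mat 1" "U ** T = mat 1"
  shows "transpose (T ** X) ** matrix_inv ((T ** X) ** transpose (T ** X)) ** (T ** X)
       = transpose X ** matrix_inv (X ** transpose X) ** X"
proof -
  define M where "M = X ** transpose X"
  define N where "N = matrix_inv M"
  have MN: "M ** N = mat 1" "N ** M = mat 1" using minv_props[OF inv] by (simp_all add: M_def N_def)
  have tt: "transpose T ** transpose U = mat 1" "transpose U ** transpose T = mat 1"
    using TU by (metis matrix_transpose_mul transpose_mat)+
  have e: "(T ** X) ** transpose (T ** X) = T ** M ** transpose T"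
    by (simp add: M_def matrix_transpose_mul matrix_mul_assoc)
  have "(T ** M ** transpose T) ** (transpose U ** N ** U) = T ** M ** (transpose T ** transpose U) ** N ** U"
    by (simp add: matrix_mul_assoc)
  also have "\<dots> = T ** (M ** N) ** U" by (simp add: tt matrix_mul_assoc)
  also have "\<dots> = mat 1" by (simp add: MN TU)
  finally have i1: "(T ** M ** transpose T) ** (transpose U ** N ** U) = mat 1" .
  have "(transpose U ** N ** U) ** (T ** M ** transpose T) = transpose U ** N ** (U ** T) ** M ** transpose T"
    by (simp add: matrix_mul_assoc)
  also have "\<dots> = transpose U ** (N ** M) ** transpose T" by (simp add: TU matrix_mul_assoc)
  also have "\<dots> = mat 1" by (simp add: MN tt)
  finally have i2: "(transpose U ** N ** U) ** (T ** M ** transpose T) = mat 1" .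
  have "matrix_inv ((T ** X) ** transpose (T ** X)) = transpose U ** N ** U"
    unfolding e by (rule minv_eq[OF i1 i2])
  then have "transpose (T ** X) ** matrix_inv ((T ** X) ** transpose (T ** X)) ** (T ** X)
      = transpose X ** (transpose T ** transpose U) ** N ** (U ** T) ** X"
    by (simp add: matrix_transpose_mul matrix_mul_assoc)
  also have "\<dots> = transpose X ** N ** X" by (simp add: tt TU)
  finally show ?thesis by (simp add: N_def M_def)
qed

lemma refs_sub:
  fixes D1 D2 :: "nat \<Rightarrow> real^'m^'d"
  assumes h1: "\<forall>i<n. aug (D2 i) = T i ** aug (D1 i)"
    and h2: "\<forall>i<n. aug (D1 i) = U i ** aug (D2 i)"
  shows "optimal_refs n D2 L \<subseteq> optimal_refs n D1 L"
proof
  fix S assume "S \<in> optimal_refs n D2 L"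
  then obtain A where A: "optimalI n D2 L A S" by (auto simp: optimal_refs_def)
  define A1 where "A1 = (\<lambda>i. A i ** T i)"
  have e1: "objI n D1 A1 S = objI n D2 A S"
    unfolding objI_def A1_def using h1 by (intro sum.cong) (auto simp: matrix_mul_assoc)
  have e2: "\<And>A' (S'::real^'m^'d). objI n D2 (\<lambda>i. A' i ** U i) S' = objI n D1 A' S'"
    unfolding objI_def using h2 by (intro sum.cong) (auto simp: matrix_mul_assoc)
  have "optimalI n D1 L A1 S"
    unfolding optimalI_def
  proof (intro conjI allI impI)
    show "feasibleI L S" using A by (simp add: optimalI_def)
    fix A' and S' :: "real^'m^'d" assume "feasibleI L S'"
    then have "objI n D2 A S \<le> objI n D2 (\<lambda>i. A' i ** U i) S'" using A by (simp add: optimalI_def)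
    then show "objI n D1 A1 S \<le> objI n D1 A' S'" using e1 e2 by simp
  qed
  then show "S \<in> optimal_refs n D1 L" by (auto simp: optimal_refs_def)
qed

theorem proposition2:
  fixes n :: nat
    and D :: "nat \<Rightarrow> real^'m^'d"
    and L :: "real^'d^'d"
    and R :: "nat \<Rightarrow> real^'d^'d"
    and t :: "nat \<Rightarrow> real^'d"
  assumes inv: "\<forall>i<n. invertible (aug (D i) ** transpose (aug (D i)))"
    and diag: "diagonal_matrix L"
    and rot: "\<forall>i<n. rotation_matrix (R i)"
  defines "D' \<equiv> (\<lambda>i. R i ** D i + (\<chi> r j. t i $ r * ones $ j))"
  shows "QI n D' = QI n D \<and> optimal_refs n D' L = optimal_refs n D L"
proof -
  define T where "T = (\<lambda>i. Tm (R i) (t i))"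
  define U where "U = (\<lambda>i. Tm (transpose (R i)) (-(transpose (R i) *v t i)))"
  have orth: "\<forall>i<n. orthogonal_matrix (R i)" using rot by (simp add: rotation_matrix_def)
  have TU: "\<forall>i<n. T i ** U i = mat 1 \<and> U i ** T i = mat 1"
    using orth Tm_inv unfolding T_def U_def by blast
  have a1: "\<forall>i<n. aug (D' i) = T i ** aug (D i)"
    by (simp add: D'_def T_def aug_trans)
  have a2: "\<forall>i<n. aug (D i) = U i ** aug (D' i)"
    using a1 TU by (simp add: matrix_mul_assoc)
  have a1': "\<forall>i<n. aug (D i) = mat 1 ** aug (D i)" by simp
  have q: "QI n D' = QI n D"
    unfolding QI_def
  proof (intro sum.cong refl)
    fix i assume "i \<in> {..<n}"
    then show "transpose (aug (D' i)) ** matrix_inv (aug (D' i) ** transpose (aug (D' i))) ** aug (D' i)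
      = transpose (aug (D i)) ** matrix_inv (aug (D i) ** transpose (aug (D i))) ** aug (D i)"
      using a1 TU inv Q_term[of "aug (D i)" "T i" "U i"] by auto
  qed
  have "optimal_refs n D' L \<subseteq> optimal_refs n D L" by (rule refs_sub[OF a1 a2])
  moreover have "optimal_refs n D L \<subseteq> optimal_refs n D' L" by (rule refs_sub[OF a2 a1])
  ultimately show ?thesis using q by blast
qed

end
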